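(* Let $\mathcal{X}$ have exactly two elements, so that $\mathscr{V}=\mathbb{R}^2$ with the componentwise order. For every $A\in\mathscr{Q}$ there is an option set $B\subseteq A$ with at most two elements such that $\{A\}$ is equivalent to $\{B\}$. Moreover, such a $B$ can be obtained from $A$ by finitely many successive removal steps, each of which replaces the current set $A'$ by $A'\setminus\{u\}$ for some $u\in A'$ for which there exist $v\in A'$ with $v\neq u$ and a real $\mu\ge0$ such that $u\le\mu v$.
   Context: Let $\mathscr{V}$ be a real vector space of functions $\mathcal X\to\mathbb{R}$ with pointwise operations; for $u,v\in\mathscr{V}$, $u\le v$ iff $u(x)\le v(x)$ for all $x$, and $u<v$ iff $u\le v$ and $u\neq v$. Let $\mathscr{V}_{>0}=\{u\in\mathscr{V}:0<u\}$ and $\mathscr{V}^s_{>0}=\{\{u\}:u\in\mathscr{V}_{>0}\}$. Let $\mathscr{Q}$ be the set of all finite subsets of $\mathscr{V}$ (including $\emptyset$). For a positive integer $n$, $\mathbb{R}^{n,+}=\{\boldsymbol\lambda\in\mathbb{R}^n:\lambda_j\ge0\ \forall j,\ \sum_j\lambda_j>0\}$, and for $\boldsymbol\lambda\in\mathbb{R}^n$, $\mathbf u=(u_1,\dots,u_n)\in\mathscr{V}^n$, $\boldsymbol\lambda\mathbf u=\sum_{j=1}^n\lambda_ju_j$. A set of desirable option sets is any $K\subseteq\mathscr{Q}$. It is coherent if for all $A,B\in K$: (K0) $A\setminus\{0\}\in K$; (K1) $\{0\}\notin K$; (K2) $\mathscr{V}^s_{>0}\subseteq K$; (K3) $\{\boldsymbol\lambda(\mathbf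 u)\mathbf u:\mathbf u\in A\times B\}\in K$ for every map $\boldsymbol\lambda:A\times B\to\mathbb{R}^{2,+}$; (K4) $A\cup Q\in K$ for all $Q\in\mathscr{Q}$. $\bar{\mathbf K}$ denotes the set of coherent sets of desirable option sets. An assessment is any subset $\mathcal{A}\subseteq\mathscr{Q}$; $\bar{\mathbf K}(\mathcal A)=\{K\in\bar{\mathbf K}:\mathcal A\subseteq K\}$. Two assessments $\mathcal A_1,\mathcal A_2$ are called equivalent if $\bar{\mathbf K}(\mathcal A_1)=\bar{\mathbf K}(\mathcal A_2)$. *)

theory Defs
  imports Complex_Main
begin

text \<open>Order on functions is the library's pointwise
  order, so u < v iff u \<le> v and u \<noteq> v.\<close>

definition pos_opts :: "('x \<Rightarrow> real) set \<Rightarrow> ('x \<Rightarrow> real) set" where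
  "pos_opts V = {u \<in> V. (\<lambda>_. 0) < u}"

definition opt_sets :: "('x \<Rightarrow> real) set \<Rightarrow> ('x \<Rightarrow> real) set set" where
  "opt_sets V = {A. finite A \<and> A \<subseteq> V}"

definition lam_pos2 :: "real \<times> real \<Rightarrow> bool" where
  "lam_pos2 l \<longleftrightarrow> fst l \<ge> 0 \<and> snd l \<ge> 0 \<and> fst l + snd l > 0"

definition coherent :: "('x \<Rightarrow> real) set \<Rightarrow> ('x \<Rightarrow> real) set set \<Rightarrow> bool" where
  "coherent V K \<longleftrightarrow> K \<subseteq> opt_sets V \<and>
     {\<lambda>_. 0} \<notin> K \<and>
     {{u} | u. u \<in> pos_opts V} \<subseteq> K \<and>
     (\<forall>A\<in>K. A - {\<lambda>_. 0} \<in> K) \<and>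
     (\<forall>A\<in>K. \<forall>B\<in>K. \<forall>l :: ('x \<Rightarrow> real) \<times> ('x \<Rightarrow> real) \<Rightarrow> real \<times> real.
        (\<forall>p\<in>A \<times> B. lam_pos2 (l p)) \<longrightarrow>
        (\<lambda>p. \<lambda>x. fst (l p) * fst p x + snd (l p) * snd p x) ` (A \<times> B) \<in> K) \<and>
     (\<forall>A\<in>K. \<forall>Q\<in>opt_sets V. A \<union> Q \<in> K)"

definition coh_ext :: "('x \<Rightarrow> real) set \<Rightarrow> ('x \<Rightarrow> real) set set \<Rightarrow> ('x \<Rightarrow> real) set set set" where
  "coh_ext V \<A> = {K. coherent V K \<and> \<A> \<subseteq> K}"

definition equiv_assess :: "('x \<Rightarrow> real) set \<Rightarrow> ('x \<Rightarrow> real) set set \<Rightarrow> ('x \<Rightarrow> real) set set \<Rightarrow> bool" where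
  "equiv_assess V \<A>1 \<A>2 \<longleftrightarrow> coh_ext V \<A>1 = coh_ext V \<A>2"

definition removal_step :: "('x \<Rightarrow> real) set \<Rightarrow> ('x \<Rightarrow> real) set \<Rightarrow> bool" where
  "removal_step A A' \<longleftrightarrow> (\<exists>u\<in>A. A' = A - {u} \<and>
     (\<exists>v\<in>A. v \<noteq> u \<and> (\<exists>\<mu>::real. \<mu> \<ge> 0 \<and> u \<le> (\<lambda>x. \<mu> * v x))))"

end

theory Submission
  imports Defs
begin

lemma remove_in:
  assumes K: "coherent UNIV K" and A: "A \<in> K" and u: "u \<in> A" and v: "v \<in> A" "v \<noteq> u"
    and mu: "\<mu> \<ge> 0" "u \<le> (\<lambda>x. \<mu> * v x)"
  shows "A - {u} \<in> K"
proof -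
  have sub: "K \<subseteq> opt_sets UNIV" and K0: "\<forall>A\<in>K. A - {\<lambda>_. 0} \<in> K"
    and K2: "{{u} | u. u \<in> pos_opts UNIV} \<subseteq> K"
    and K3: "\<forall>A\<in>K. \<forall>B\<in>K. \<forall>l :: ('a \<Rightarrow> real) \<times> ('a \<Rightarrow> real) \<Rightarrow> real \<times> real.
        (\<forall>p\<in>A \<times> B. lam_pos2 (l p)) \<longrightarrow>
        (\<lambda>p. \<lambda>x. fst (l p) * fst p x + snd (l p) * snd p x) ` (A \<times> B) \<in> K"
    and K4: "\<forall>A\<in>K. \<forall>Q\<in>opt_sets UNIV. A \<union> Q \<in> K"
    using K unfolding coherent_def by auto
  have fin: "finite A" using A sub by (auto simp: opt_sets_def)
  define c where "c = (if \<mu> > 0 then 1/\<mu> else 1)"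
  have c: "c > 0" using mu by (simp add: c_def)
  have cv: "(\<lambda>x. c * (\<mu> * v x)) = v \<or> (\<lambda>x. c * (\<mu> * v x)) = (\<lambda>_. 0)"
    using mu by (auto simp: c_def)
  have "\<exists>R\<in>K. R \<subseteq> (A - {u}) \<union> {\<lambda>_. 0}"
  proof (cases "u = (\<lambda>x. \<mu> * v x)")
    case True
    define l where "l = (\<lambda>p::('a \<Rightarrow> real) \<times> ('a \<Rightarrow> real). if fst p = u then (c, 0::real) else (1, 0))"
    have "\<forall>p\<in>A \<times> A. lam_pos2 (l p)" using c by (auto simp: l_def lam_pos2_def)
    hence R: "(\<lambda>p. \<lambda>x. fst (l p) * fst p x + snd (l p) * snd p x) ` (A \<times> A) \<in> K"
      using K3 A by blast
    have "(\<lambda>p. \<lambda>x. fst (l p) * fst p x + snd (l p) * snd p x) ` (A \<times> A) \<subseteq> (A - {u}) \<union> {\<lambda>_. 0}"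
    proof
      fix w assume "w \<in> (\<lambda>p. \<lambda>x. fst (l p) * fst p x + snd (l p) * snd p x) ` (A \<times> A)"
      then obtain a b where ab: "a \<in> A" "b \<in> A" and w: "w = (\<lambda>x. fst (l (a,b)) * a x + snd (l (a,b)) * b x)"
        by auto
      show "w \<in> (A - {u}) \<union> {\<lambda>_. 0}"
      proof (cases "a = u")
        case True
        hence "w = (\<lambda>x. c * (\<mu> * v x))" using w \<open>u = _\<close> by (simp add: l_def)
        thus ?thesis using cv v by auto
      next
        case False
        hence "w = a" using w by (simp add: l_def)
        thus ?thesis using False ab by auto
      qed
    qed
    thus ?thesis using R by blast
  next
    case False
    define d where "d = (\<lambda>x. \<mu> * v x - u x)"
    have "(\<lambda>_. 0) \<le> d" using mu(2) unfolding d_def le_fun_def by auto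
    moreover have "(\<lambda>_. 0) \<noteq> d"
    proof
      assume h: "(\<lambda>_. 0) = d"
      have "u = (\<lambda>x. \<mu> * v x)"
      proof
        fix x
        have "0 = d x" using fun_cong[OF h, of x] by simp
        thus "u x = \<mu> * v x" by (simp add: d_def)
      qed
      with False show False by simp
    qed
    ultimately have "(\<lambda>_. 0) < d" by (simp add: less_le)
    hence dK: "{d} \<in> K" using K2 by (auto simp: pos_opts_def)
    define l where "l = (\<lambda>p::('a \<Rightarrow> real) \<times> ('a \<Rightarrow> real). if fst p = u then (c, c) else (1, 0::real))"
    have "\<forall>p\<in>A \<times> {d}. lam_pos2 (l p)" using c by (auto simp: l_def lam_pos2_def)
    hence R: "(\<lambda>p. \<lambda>x. fst (l p) * fst p x + snd (l p) * snd p x) ` (A \<times> {d}) \<in> K"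
      using K3 A dK by blast
    have "(\<lambda>p. \<lambda>x. fst (l p) * fst p x + snd (l p) * snd p x) ` (A \<times> {d}) \<subseteq> (A - {u}) \<union> {\<lambda>_. 0}"
    proof
      fix w assume "w \<in> (\<lambda>p. \<lambda>x. fst (l p) * fst p x + snd (l p) * snd p x) ` (A \<times> {d})"
      then obtain a where ab: "a \<in> A" and w: "w = (\<lambda>x. fst (l (a,d)) * a x + snd (l (a,d)) * d x)"
        by auto
      show "w \<in> (A - {u}) \<union> {\<lambda>_. 0}"
      proof (cases "a = u")
        case True
        hence "w = (\<lambda>x. c * (\<mu> * v x))" using w by (simp add: l_def d_def algebra_simps)
        thus ?thesis using cv v by auto
      next
        case False
        hence "w = a" using w by (simp add: l_def)
        thus ?thesis using False ab by auto
      qed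
    qed
    thus ?thesis using R by blast
  qed
  then obtain R where R: "R \<in> K" "R \<subseteq> (A - {u}) \<union> {\<lambda>_. 0}" by blast
  have "R - {\<lambda>_. 0} \<in> K" using K0 R by blast
  moreover have "A - {u} \<in> opt_sets UNIV" using fin by (simp add: opt_sets_def)
  ultimately have "(R - {\<lambda>_. 0}) \<union> (A - {u}) \<in> K" using K4 by blast
  moreover have "(R - {\<lambda>_. 0}) \<union> (A - {u}) = A - {u}" using R by blast
  ultimately show ?thesis by simp
qed

lemma remove_equiv:
  assumes fin: "finite A" and u: "u \<in> A" and v: "v \<in> A" "v \<noteq> u"
    and mu: "\<mu> \<ge> 0" "u \<le> (\<lambda>x. \<mu> * v x)"
  shows "equiv_assess UNIV {A} {A - {u}}"
  unfolding equiv_assess_def coh_ext_def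
proof (intro set_eqI iffI; clarsimp)
  fix K assume K: "coherent UNIV K" "A \<in> K"
  thus "A - {u} \<in> K" using remove_in[OF K u v mu] by blast
next
  fix K assume K: "coherent UNIV K" "A - {u} \<in> K"
  have "\<forall>A\<in>K. \<forall>Q\<in>opt_sets UNIV. A \<union> Q \<in> K" using K(1) unfolding coherent_def by auto
  moreover have "{u} \<in> opt_sets UNIV" by (simp add: opt_sets_def)
  ultimately have "(A - {u}) \<union> {u} \<in> K" using K(2) by blast
  moreover have "(A - {u}) \<union> {u} = A" using u by blast
  ultimately show "A \<in> K" by simp
qed

lemma pair_coord:
  fixes u v :: "'x \<Rightarrow> real"
  assumes U: "UNIV = {c, d}" and pos: "u c > 0" "v c > 0"
  shows "(\<exists>\<mu>\<ge>0. u \<le> (\<lambda>x. \<mu> * v x)) \<or> (\<exists>\<mu>\<ge>0. v \<le> (\<lambda>x. \<mu> * u x))"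
proof (cases "u d * v c \<le> u c * v d")
  case True
  have "u \<le> (\<lambda>x. (u c / v c) * v x)"
    unfolding le_fun_def
  proof
    fix x
    have "x = c \<or> x = d" using U by blast
    thus "u x \<le> u c / v c * v x"
    proof
      assume "x = d"
      have "u d \<le> u c * v d / v c" using True pos by (simp add: pos_le_divide_eq)
      thus ?thesis using \<open>x = d\<close> by simp
    qed (use pos in simp)
  qed
  thus ?thesis using pos by (intro disjI1 exI[of _ "u c / v c"]) auto
next
  case False
  have "v \<le> (\<lambda>x. (v c / u c) * u x)"
    unfolding le_fun_def
  proof
    fix x
    have "x = c \<or> x = d" using U by blast
    thus "v x \<le> v c / u c * u x"
    proof
      assume "x = d"
      have "v d \<le> v c * u d / u c" using False pos by (simp add: pos_le_divide_eq mult.commute)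
      thus ?thesis using \<open>x = d\<close> by simp
    qed (use pos in simp)
  qed
  thus ?thesis using pos by (intro disjI2 exI[of _ "v c / u c"]) auto
qed

lemma triple:
  fixes p q r :: "'x \<Rightarrow> real" and a b :: 'x
  assumes U: "UNIV = {a, b}" and dist: "p \<noteq> q" "p \<noteq> r" "q \<noteq> r"
  shows "\<exists>u\<in>{p,q,r}. \<exists>v\<in>{p,q,r}. v \<noteq> u \<and> (\<exists>\<mu>\<ge>0. u \<le> (\<lambda>x. \<mu> * v x))"
    (is "?G")
proof -
  have U': "UNIV = {b, a}" using U by blast
  have pick: "?G" if "u \<in> {p,q,r}" "v \<in> {p,q,r}" "v \<noteq> u" "\<mu> \<ge> 0" "u \<le> (\<lambda>x. \<mu> * v x)" for u v \<mu>
    using that by blast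
  have nonpos: "w \<le> (\<lambda>x. 0 * z x)" if "w a \<le> 0" "w b \<le> 0" for w z :: "'x \<Rightarrow> real"
    unfolding le_fun_def
  proof
    fix x have "x = a \<or> x = b" using U by blast
    thus "w x \<le> 0 * z x" using that by auto
  qed
  have pr: "?G"
    if "w \<in> {p,q,r}" "z \<in> {p,q,r}" "w \<noteq> z" "(w a > 0 \<and> z a > 0) \<or> (w b > 0 \<and> z b > 0)" for w z
  proof -
    have "(\<exists>\<mu>\<ge>0. w \<le> (\<lambda>x. \<mu> * z x)) \<or> (\<exists>\<mu>\<ge>0. z \<le> (\<lambda>x. \<mu> * w x))"
      using that(4) pair_coord[OF U, of w z] pair_coord[OF U', of w z] by blast
    thus ?thesis
    proof
      assume "\<exists>\<mu>\<ge>0. w \<le> (\<lambda>x. \<mu> * z x)"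
      then obtain \<mu> where "\<mu> \<ge> 0" "w \<le> (\<lambda>x. \<mu> * z x)" by blast
      thus ?thesis using pick[of w z \<mu>] that(1-3) by simp
    next
      assume "\<exists>\<mu>\<ge>0. z \<le> (\<lambda>x. \<mu> * w x)"
      then obtain \<mu> where "\<mu> \<ge> 0" "z \<le> (\<lambda>x. \<mu> * w x)" by blast
      thus ?thesis using pick[of z w \<mu>] that(1-3) by simp
    qed
  qed
  have ins: "p \<in> {p,q,r}" "q \<in> {p,q,r}" "r \<in> {p,q,r}" by simp_all
  show ?thesis
  proof (cases "(p a \<le> 0 \<and> p b \<le> 0) \<or> (q a \<le> 0 \<and> q b \<le> 0) \<or> (r a \<le> 0 \<and> r b \<le> 0)")
    case True
    thus ?thesis
    proof (elim disjE conjE)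
      assume "p a \<le> 0" "p b \<le> 0"
      thus ?thesis using pick[OF ins(1) ins(2), of 0] nonpos[of p q] dist by simp
    next
      assume "q a \<le> 0" "q b \<le> 0"
      thus ?thesis using pick[OF ins(2) ins(1), of 0] nonpos[of q p] dist by simp
    next
      assume "r a \<le> 0" "r b \<le> 0"
      thus ?thesis using pick[OF ins(3) ins(1), of 0] nonpos[of r p] dist by simp
    qed
  next
    case False
    hence "(p a > 0 \<or> p b > 0) \<and> (q a > 0 \<or> q b > 0) \<and> (r a > 0 \<or> r b > 0)" by auto
    hence "(p a > 0 \<and> q a > 0 \<or> p b > 0 \<and> q b > 0) \<or>
           (p a > 0 \<and> r a > 0 \<or> p b > 0 \<and> r b > 0) \<or>
           (q a > 0 \<and> r a > 0 \<or> q b > 0 \<and> r b > 0)" by blast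
    thus ?thesis
      using pr[OF ins(1) ins(2) dist(1)] pr[OF ins(1) ins(3) dist(2)] pr[OF ins(2) ins(3) dist(3)]
      by blast
  qed
qed

theorem proposition5:
  fixes A :: "('x::finite \<Rightarrow> real) set"
  assumes "card (UNIV :: 'x set) = 2"
    and "A \<in> opt_sets (UNIV :: ('x \<Rightarrow> real) set)"
  shows "\<exists>B. B \<subseteq> A \<and> card B \<le> 2 \<and> equiv_assess UNIV {A} {B} \<and> removal_step\<^sup>*\<^sup>* A B"
proof -
  obtain a b :: 'x where U: "UNIV = {a, b}" using assms(1) by (metis card_2_iff)
  have fin: "finite A" using assms(2) by (simp add: opt_sets_def)
  show ?thesis using fin
  proof (induction "card A" arbitrary: A rule: less_induct)
    case less
    show ?case
    proof (cases "card A \<le> 2")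
      case True
      thus ?thesis by (intro exI[of _ A]) (auto simp: equiv_assess_def)
    next
      case False
      obtain p where p: "p \<in> A" using False by fastforce
      have c1: "card (A - {p}) \<ge> 2" using False p less.prems by auto
      obtain q where q: "q \<in> A - {p}" using c1 by (metis all_not_in_conv card.empty not_numeral_le_zero)
      have c2: "card (A - {p} - {q}) \<ge> 1" using c1 q less.prems by auto
      obtain r where r: "r \<in> A - {p} - {q}" using c2 by (metis all_not_in_conv card.empty not_one_le_zero)
      obtain u v \<mu> where uv: "u \<in> {p,q,r}" "v \<in> {p,q,r}" "v \<noteq> u" "\<mu> \<ge> 0" "u \<le> (\<lambda>x. \<mu> * v x)"
        using triple[OF U, of p q r] p q r by auto
      have uA: "u \<in> A" and vA: "v \<in> A" using uv p q r by auto
      have step: "removal_step A (A - {u})"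
        unfolding removal_step_def using uA vA uv by blast
      have eq1: "equiv_assess UNIV {A} {A - {u}}" using remove_equiv[OF less.prems uA vA uv(3-5)] .
      have "card (A - {u}) < card A" using uA less.prems by (metis card_Diff1_less)
      then obtain B where B: "B \<subseteq> A - {u}" "card B \<le> 2" "equiv_assess UNIV {A - {u}} {B}"
        "removal_step\<^sup>*\<^sup>* (A - {u}) B"
        using less.hyps less.prems by blast
      show ?thesis
        using B eq1 step
        by (intro exI[of _ B]) (auto simp: equiv_assess_def intro: converse_rtranclp_into_rtranclp)
    qed
  qed
qed

end
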